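(* Let $L^2_0(B)$ denote the vector space $B$ with inner product $\langle b,b'\rangle=\Phi_A(b^*b')$. Then $L^2_0(B)\in{}_B\mathrm{Rep}^A$, with $B$ acting by left multiplication and the right $A$-comodule structure $\alpha_B=\Delta_A|_B$.
   Context: $A$ is a CQG Hopf $*$-algebra: a complex Hopf algebra $(A,\Delta_A,\varepsilon_A,S_A)$ with an anti-linear involution making it a $*$-algebra with $\Delta_A$ a $*$-homomorphism, admitting a state $\Phi_A$ with $(\Phi_A\otimes\mathrm{id})\Delta_A(a)=\Phi_A(a)1=(\mathrm{id}\otimes\Phi_A)\Delta_A(a)$ (it is faithful). Put $a^\dagger=S_A(a)^*$. $B\subseteq A$ is a unital right coideal $*$-subalgebra, i.e. $\Delta_A(B)\subseteq B\odot A$. ${}_B\mathrm{Rep}^A$: left $B$-modules $V$ with right $A$-comodule structure $v\mapsto v_{(0)}\otimes v_{(1)}$ satisfying $(bv)_{(0)}\otimes(bv)_{(1)}=b_{(1)}v_{(0)}\otimes b_{(2)}v_{(1)}$, which are pre-Hilbert spaces with $\langle v,bw\rangle=\langle b^*v,w\rangle$ and $\langle v,w_{(0)}\rangle w_{(1)}=\langle v_{(0)},w\rangle v_{(1)}^\dagger$ for all $v,w\in V$, $b\in B$. *)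

theory Defs
  imports Complex_Main
begin

text \<open>Algebraic tensors are represented by finite lists of elementary tensors
  (pairs of legs).  Two representatives define the same element of the algebraic
  tensor product iff they agree on all products of linear functionals (algebraic
  duals separate points of V \<otimes> W).\<close>

definition lin_fun :: "(complex \<Rightarrow> 'v \<Rightarrow> 'v) \<Rightarrow> ('v::ab_group_add \<Rightarrow> complex) \<Rightarrow> bool" where
  "lin_fun sc f \<longleftrightarrow> (\<forall>x y. f (x + y) = f x + f y) \<and> (\<forall>c x. f (sc c x) = c * f x)"

definition tensor_eq ::
  "(complex \<Rightarrow> 'v \<Rightarrow> 'v) \<Rightarrow> (complex \<Rightarrow> 'w \<Rightarrow> 'w) \<Rightarrow>
   ('v::ab_group_add \<times> 'w::ab_group_add) list \<Rightarrow> ('v \<times> 'w) list \<Rightarrow> bool" where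
  "tensor_eq scV scW xs ys \<longleftrightarrow>
     (\<forall>f g. lin_fun scV f \<longrightarrow> lin_fun scW g \<longrightarrow>
        (\<Sum>(x,y)\<leftarrow>xs. f x * g y) = (\<Sum>(x,y)\<leftarrow>ys. f x * g y))"

definition cqg_hopf_star_algebra ::
  "(complex \<Rightarrow> 'a \<Rightarrow> 'a) \<Rightarrow> ('a \<Rightarrow> 'a) \<Rightarrow> ('a \<Rightarrow> ('a \<times> 'a) list) \<Rightarrow>
   ('a \<Rightarrow> complex) \<Rightarrow> ('a \<Rightarrow> 'a) \<Rightarrow> ('a::ring_1 \<Rightarrow> complex) \<Rightarrow> bool" where
  "cqg_hopf_star_algebra sc st Delta eps S Phi \<longleftrightarrow>
     \<comment> \<open>complex algebra\<close>
     vector_space sc \<and>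
     (\<forall>c x y. sc c (x * y) = sc c x * y \<and> sc c (x * y) = x * sc c y) \<and>
     \<comment> \<open>coproduct: linear, unital, multiplicative, coassociative\<close>
     (\<forall>x y. tensor_eq sc sc (Delta (x + y)) (Delta x @ Delta y)) \<and>
     (\<forall>c x. tensor_eq sc sc (Delta (sc c x)) (map (\<lambda>(p,q). (sc c p, q)) (Delta x))) \<and>
     tensor_eq sc sc (Delta 1) [(1,1)] \<and>
     (\<forall>x y. tensor_eq sc sc (Delta (x * y))
              [(p * p', q * q'). (p,q) \<leftarrow> Delta x, (p',q') \<leftarrow> Delta y]) \<and>
     (\<forall>x f g h. lin_fun sc f \<longrightarrow> lin_fun sc g \<longrightarrow> lin_fun sc h \<longrightarrow>
        (\<Sum>(p,q)\<leftarrow>Delta x. \<Sum>(p',q')\<leftarrow>Delta p. f p' * g q' * h q) =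
        (\<Sum>(p,q)\<leftarrow>Delta x. \<Sum>(p',q')\<leftarrow>Delta q. f p * g p' * h q')) \<and>
     \<comment> \<open>counit: unital algebra homomorphism satisfying the counit law\<close>
     lin_fun sc eps \<and> eps 1 = 1 \<and> (\<forall>x y. eps (x * y) = eps x * eps y) \<and>
     (\<forall>x. (\<Sum>(p,q)\<leftarrow>Delta x. sc (eps p) q) = x) \<and>
     (\<forall>x. (\<Sum>(p,q)\<leftarrow>Delta x. sc (eps q) p) = x) \<and>
     \<comment> \<open>antipode\<close>
     (\<forall>x y. S (x + y) = S x + S y) \<and> (\<forall>c x. S (sc c x) = sc c (S x)) \<and>
     (\<forall>x. (\<Sum>(p,q)\<leftarrow>Delta x. S p * q) = sc (eps x) 1) \<and>
     (\<forall>x. (\<Sum>(p,q)\<leftarrow>Delta x. p * S q) = sc (eps x) 1) \<and>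
     \<comment> \<open>anti-linear involution making it a *-algebra, Delta a *-homomorphism\<close>
     (\<forall>x y. st (x + y) = st x + st y) \<and> (\<forall>c x. st (sc c x) = sc (cnj c) (st x)) \<and>
     (\<forall>x y. st (x * y) = st y * st x) \<and> (\<forall>x. st (st x) = x) \<and>
     (\<forall>x. tensor_eq sc sc (Delta (st x)) (map (\<lambda>(p,q). (st p, st q)) (Delta x))) \<and>
     \<comment> \<open>state: linear, unital, positive, faithful, left and right invariant\<close>
     lin_fun sc Phi \<and> Phi 1 = 1 \<and>
     (\<forall>x. Im (Phi (st x * x)) = 0 \<and> 0 \<le> Re (Phi (st x * x))) \<and>
     (\<forall>x. Phi (st x * x) = 0 \<longrightarrow> x = 0) \<and>
     (\<forall>x. (\<Sum>(p,q)\<leftarrow>Delta x. sc (Phi p) q) = sc (Phi x) 1) \<and>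
     (\<forall>x. (\<Sum>(p,q)\<leftarrow>Delta x. sc (Phi q) p) = sc (Phi x) 1)"

definition right_coideal_star_subalgebra ::
  "(complex \<Rightarrow> 'a \<Rightarrow> 'a) \<Rightarrow> ('a \<Rightarrow> 'a) \<Rightarrow> ('a \<Rightarrow> ('a \<times> 'a) list) \<Rightarrow> 'a::ring_1 set \<Rightarrow> bool" where
  "right_coideal_star_subalgebra sc st Delta B \<longleftrightarrow>
     1 \<in> B \<and> (\<forall>x\<in>B. \<forall>y\<in>B. x + y \<in> B \<and> x * y \<in> B) \<and>
     (\<forall>c. \<forall>x\<in>B. sc c x \<in> B) \<and> (\<forall>x\<in>B. st x \<in> B) \<and>
     (\<forall>b\<in>B. \<exists>xs. set (map fst xs) \<subseteq> B \<and> tensor_eq sc sc (Delta b) xs)"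

text \<open>V is a subspace (carrier set) of a complex vector space type 'v; the coaction is
  given by representatives in V \<otimes> A (first legs in V).\<close>

definition in_BRepA ::
  "(complex \<Rightarrow> 'a \<Rightarrow> 'a) \<Rightarrow> ('a \<Rightarrow> 'a) \<Rightarrow> ('a \<Rightarrow> ('a \<times> 'a) list) \<Rightarrow>
   ('a \<Rightarrow> complex) \<Rightarrow> ('a \<Rightarrow> 'a) \<Rightarrow> 'a::ring_1 set \<Rightarrow>
   'v set \<Rightarrow> (complex \<Rightarrow> 'v \<Rightarrow> 'v) \<Rightarrow> ('a \<Rightarrow> 'v \<Rightarrow> 'v) \<Rightarrow> ('v \<Rightarrow> ('v \<times> 'a) list) \<Rightarrow>
   ('v::ab_group_add \<Rightarrow> 'v \<Rightarrow> complex) \<Rightarrow> bool" where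
  "in_BRepA sc st Delta eps S B V scV act coact inner \<longleftrightarrow>
     \<comment> \<open>V is a complex vector space\<close>
     vector_space scV \<and> 0 \<in> V \<and> (\<forall>v\<in>V. \<forall>w\<in>V. v + w \<in> V) \<and> (\<forall>c. \<forall>v\<in>V. scV c v \<in> V) \<and>
     \<comment> \<open>left B-module\<close>
     (\<forall>b\<in>B. \<forall>v\<in>V. act b v \<in> V) \<and>
     (\<forall>b\<in>B. \<forall>b'\<in>B. \<forall>v\<in>V. act (b + b') v = act b v + act b' v) \<and>
     (\<forall>b\<in>B. \<forall>v\<in>V. \<forall>w\<in>V. act b (v + w) = act b v + act b w) \<and>
     (\<forall>c. \<forall>b\<in>B. \<forall>v\<in>V. act (sc c b) v = scV c (act b v) \<and> act b (scV c v) = scV c (act b v)) \<and>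
     (\<forall>b\<in>B. \<forall>b'\<in>B. \<forall>v\<in>V. act (b * b') v = act b (act b' v)) \<and>
     (\<forall>v\<in>V. act 1 v = v) \<and>
     \<comment> \<open>right A-comodule\<close>
     (\<forall>v\<in>V. set (map fst (coact v)) \<subseteq> V) \<and>
     (\<forall>v\<in>V. \<forall>w\<in>V. tensor_eq scV sc (coact (v + w)) (coact v @ coact w)) \<and>
     (\<forall>c. \<forall>v\<in>V. tensor_eq scV sc (coact (scV c v)) (map (\<lambda>(x,a). (scV c x, a)) (coact v))) \<and>
     (\<forall>v\<in>V. \<forall>f g h. lin_fun scV f \<longrightarrow> lin_fun sc g \<longrightarrow> lin_fun sc h \<longrightarrow>
        (\<Sum>(w,a)\<leftarrow>coact v. \<Sum>(w',a')\<leftarrow>coact w. f w' * g a' * h a) =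
        (\<Sum>(w,a)\<leftarrow>coact v. \<Sum>(p,q)\<leftarrow>Delta a. f w * g p * h q)) \<and>
     (\<forall>v\<in>V. (\<Sum>(w,a)\<leftarrow>coact v. scV (eps a) w) = v) \<and>
     \<comment> \<open>compatibility (bv)_(0) \<otimes> (bv)_(1) = b_(1) v_(0) \<otimes> b_(2) v_(1)\<close>
     (\<forall>b\<in>B. \<forall>v\<in>V. \<forall>xs. set (map fst xs) \<subseteq> B \<longrightarrow> tensor_eq sc sc xs (Delta b) \<longrightarrow>
        tensor_eq scV sc (coact (act b v))
          [(act p w, q * a). (p,q) \<leftarrow> xs, (w,a) \<leftarrow> coact v]) \<and>
     \<comment> \<open>pre-Hilbert space (inner product anti-linear in the first variable)\<close>
     (\<forall>u\<in>V. \<forall>v\<in>V. \<forall>w\<in>V. inner u (v + w) = inner u v + inner u w) \<and>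
     (\<forall>c. \<forall>u\<in>V. \<forall>v\<in>V. inner u (scV c v) = c * inner u v) \<and>
     (\<forall>u\<in>V. \<forall>v\<in>V. inner v u = cnj (inner u v)) \<and>
     (\<forall>v\<in>V. Im (inner v v) = 0 \<and> 0 \<le> Re (inner v v)) \<and>
     (\<forall>v\<in>V. inner v v = 0 \<longrightarrow> v = 0) \<and>
     \<comment> \<open>\<langle>v, b w\<rangle> = \<langle>b* v, w\<rangle>\<close>
     (\<forall>b\<in>B. \<forall>v\<in>V. \<forall>w\<in>V. inner v (act b w) = inner (act (st b) v) w) \<and>
     \<comment> \<open>\<langle>v, w_(0)\<rangle> w_(1) = \<langle>v_(0), w\<rangle> v_(1)^\<dagger>, with a^\<dagger> = S(a)^*\<close>
     (\<forall>v\<in>V. \<forall>w\<in>V. (\<Sum>(x,a)\<leftarrow>coact w. sc (inner v x) a) =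
                   (\<Sum>(x,a)\<leftarrow>coact v. sc (inner x w) (st (S a))))"

end

theory Submission
  imports Defs
begin


lemma lin_fun_add: "lin_fun sc f \<Longrightarrow> f (x + y) = f x + f y"
  by (simp add: lin_fun_def)
lemma lin_fun_sc: "lin_fun sc f \<Longrightarrow> f (sc c x) = c * f x"
  by (simp add: lin_fun_def)
lemma lin_fun_zero: assumes "lin_fun sc f" shows "f 0 = 0"
proof -
  have "f 0 = f 0 + f 0" using lin_fun_add[OF assms, of 0 0] by simp
  then show ?thesis by simp
qed
lemma lin_fun_sum_list: assumes "lin_fun sc f" shows "f (sum_list (map g xs)) = sum_list (map (\<lambda>x. f (g x)) xs)"
  by (induction xs) (simp_all add: lin_fun_zero[OF assms] lin_fun_add[OF assms])
lemma lin_fun_sum_list2: assumes "lin_fun sc f" shows "f (\<Sum>(p,q)\<leftarrow>xs. g p q) = (\<Sum>(p,q)\<leftarrow>xs. f (g p q))"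
  by (induction xs) (auto simp add: lin_fun_zero[OF assms] lin_fun_add[OF assms])
lemma lin_fun_sum: assumes "lin_fun sc f" shows "f (sum g E) = (\<Sum>e\<in>E. f (g e))"
  by (induction E rule: infinite_finite_induct) (simp_all add: lin_fun_zero[OF assms] lin_fun_add[OF assms])

lemma sl_cong: "(\<And>x. x \<in> set xs \<Longrightarrow> f x = g x) \<Longrightarrow> sum_list (map f xs) = sum_list (map g xs)"
  by (induction xs) auto
lemma sl2_cong: "(\<And>p q. (p,q) \<in> set xs \<Longrightarrow> f p q = g p q) \<Longrightarrow> (\<Sum>(p,q)\<leftarrow>xs. f p q) = (\<Sum>(p,q)\<leftarrow>xs. g p q)"
  by (induction xs) auto

lemma sl_sum_swap: "(\<Sum>(p,q)\<leftarrow>xs. \<Sum>e\<in>E. G p q e) = (\<Sum>e\<in>E. \<Sum>(p,q)\<leftarrow>xs. G p q e)"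
  by (induction xs) (auto simp: sum.distrib)
lemma sl_sl_swap: "(\<Sum>(p,q)\<leftarrow>xs. \<Sum>(p',q')\<leftarrow>ys. G p q p' q' :: 'c::comm_monoid_add) = (\<Sum>(p',q')\<leftarrow>ys. \<Sum>(p,q)\<leftarrow>xs. G p q p' q')"
proof (induction xs)
  case Nil
  then show ?case by (induction ys) auto
next
  case (Cons a xs)
  have "(\<Sum>(p',q')\<leftarrow>ys. G (fst a) (snd a) p' q' + (\<Sum>(p,q)\<leftarrow>xs. G p q p' q')) =
     (\<Sum>(p',q')\<leftarrow>ys. G (fst a) (snd a) p' q') + (\<Sum>(p',q')\<leftarrow>ys. \<Sum>(p,q)\<leftarrow>xs. G p q p' q')"
    by (induction ys) (auto simp: add_ac)
  with Cons show ?case by (cases a) auto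
qed
lemma sl_mult_right: "(\<Sum>(p,q)\<leftarrow>xs. G p q) * (c::'a::semiring_0) = (\<Sum>(p,q)\<leftarrow>xs. G p q * c)"
  by (induction xs) (auto simp: distrib_right)
lemma sl_mult_left: "(c::'a::semiring_0) * (\<Sum>(p,q)\<leftarrow>xs. G p q) = (\<Sum>(p,q)\<leftarrow>xs. c * G p q)"
  by (induction xs) (auto simp: distrib_left)

lemma sl_prodlist: "(\<Sum>(x,y)\<leftarrow>[(F p p', H q q'). (p,q)\<leftarrow>xs, (p',q')\<leftarrow>ys]. G x y) =
   (\<Sum>(p,q)\<leftarrow>xs. \<Sum>(p',q')\<leftarrow>ys. G (F p p') (H q q'))"
proof (induction xs)
  case Nil then show ?case by simp
next
  case (Cons a xs)
  have "(\<Sum>(x,y)\<leftarrow>[(F (fst a) p', H (snd a) q'). (p',q')\<leftarrow>ys]. G x y) = (\<Sum>(p',q')\<leftarrow>ys. G (F (fst a) p') (H (snd a) q'))"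
    by (induction ys) auto
  with Cons show ?case by (cases a) auto
qed

lemma sep:
  assumes vs: "vector_space (sc :: complex \<Rightarrow> 'v::ab_group_add \<Rightarrow> 'v)"
    and eq: "\<And>f. lin_fun sc f \<Longrightarrow> f x = f y"
  shows "x = y"
proof (rule ccontr)
  assume ne: "x \<noteq> y"
  interpret vs: vector_space sc by fact
  obtain Bs where ind: "vs.independent Bs" and sp: "UNIV \<subseteq> vs.span Bs"
    using vs.basis_exists[of UNIV] by blast
  have insp: "v \<in> vs.span Bs" for v using sp by auto
  have lin: "lin_fun sc (\<lambda>v. vs.representation Bs v b)" for b
    unfolding lin_fun_def
    using vs.representation_add[OF ind insp insp] vs.representation_scale[OF ind insp] by simp
  have "(\<Sum>b | vs.representation Bs (x - y) b \<noteq> 0. sc (vs.representation Bs (x - y) b) b) = x - y"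
    using vs.sum_nonzero_representation_eq[OF ind insp] .
  then obtain b where b: "vs.representation Bs (x - y) b \<noteq> 0"
    using ne by (metis (mono_tags, lifting) empty_Collect_eq eq_iff_diff_eq_0 sum.empty)
  have "vs.representation Bs (x - y) b = vs.representation Bs x b - vs.representation Bs y b"
    using vs.representation_diff[OF ind insp insp] by simp
  with eq[OF lin[of b]] b show False by simp
qed

lemma expand:
  assumes vs: "vector_space (sc :: complex \<Rightarrow> 'v::ab_group_add \<Rightarrow> 'v)" and fin: "finite Q"
  shows "\<exists>E c. finite E \<and> (\<forall>e. lin_fun sc (c e)) \<and> (\<forall>q\<in>Q. q = (\<Sum>e\<in>E. sc (c e q) e))"
proof -
  interpret vs: vector_space sc by fact
  obtain Bs where ind: "vs.independent Bs" and sp: "UNIV \<subseteq> vs.span Bs"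
    using vs.basis_exists[of UNIV] by blast
  have insp: "v \<in> vs.span Bs" for v using sp by auto
  have lin: "lin_fun sc (\<lambda>v. vs.representation Bs v b)" for b
    unfolding lin_fun_def
    using vs.representation_add[OF ind insp insp] vs.representation_scale[OF ind insp] by simp
  define E where "E = (\<Union>q\<in>Q. {b. vs.representation Bs q b \<noteq> 0})"
  have finE: "finite E" unfolding E_def using fin vs.finite_representation by blast
  have "q = (\<Sum>e\<in>E. sc (vs.representation Bs q e) e)" if "q \<in> Q" for q
  proof -
    have "(\<Sum>e\<in>E. sc (vs.representation Bs q e) e) = (\<Sum>b | vs.representation Bs q b \<noteq> 0. sc (vs.representation Bs q b) b)"
      by (rule sum.mono_neutral_cong_right) (use finE that in \<open>auto simp: E_def\<close>)
    then show ?thesis using vs.sum_nonzero_representation_eq[OF ind insp] by simp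
  qed
  then show ?thesis
    by (intro exI[of _ E] exI[of _ "\<lambda>b v. vs.representation Bs v b"] conjI allI ballI finE lin) auto
qed

lemma te_bilin:
  assumes vs: "vector_space (scW :: complex \<Rightarrow> 'w::ab_group_add \<Rightarrow> 'w)"
    and te: "tensor_eq scV scW xs ys"
    and l1: "\<And>q. lin_fun scV (\<lambda>p. K p q)" and l2: "\<And>p. lin_fun scW (K p)"
  shows "(\<Sum>(p,q)\<leftarrow>xs. K p q) = (\<Sum>(p,q)\<leftarrow>ys. K p q)"
proof -
  obtain E c where finE: "finite E" and lc: "\<And>e. lin_fun scW (c e)"
    and ex: "\<And>q. q \<in> set (map snd (xs @ ys)) \<Longrightarrow> q = (\<Sum>e\<in>E. scW (c e q) e)"
    using expand[OF vs, of "set (map snd (xs @ ys))"] by (metis List.finite_set)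
  have K: "K p q = (\<Sum>e\<in>E. K p e * c e q)" if "q \<in> set (map snd (xs @ ys))" for p q
  proof -
    have "K p q = K p (\<Sum>e\<in>E. scW (c e q) e)" using ex[OF that] by simp
    also have "\<dots> = (\<Sum>e\<in>E. K p e * c e q)"
      by (simp add: lin_fun_sum[OF l2] lin_fun_sc[OF l2] mult.commute)
    finally show ?thesis .
  qed
  have "(\<Sum>(p,q)\<leftarrow>xs. K p q) = (\<Sum>(p,q)\<leftarrow>xs. \<Sum>e\<in>E. K p e * c e q)"
    by (rule sl2_cong) (use K in force)
  also have "\<dots> = (\<Sum>e\<in>E. \<Sum>(p,q)\<leftarrow>xs. K p e * c e q)" by (rule sl_sum_swap)
  also have "\<dots> = (\<Sum>e\<in>E. \<Sum>(p,q)\<leftarrow>ys. K p e * c e q)"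
    using te l1 lc unfolding tensor_eq_def by auto
  also have "\<dots> = (\<Sum>(p,q)\<leftarrow>ys. \<Sum>e\<in>E. K p e * c e q)" by (rule sl_sum_swap[symmetric])
  also have "\<dots> = (\<Sum>(p,q)\<leftarrow>ys. K p q)"
    apply (rule sl2_cong) apply (rule K[symmetric]) apply force done
  finally show ?thesis .
qed

definition addh :: "(complex \<Rightarrow> 'v \<Rightarrow> 'v) \<Rightarrow> (complex \<Rightarrow> 'u \<Rightarrow> 'u) \<Rightarrow> ('v::ab_group_add \<Rightarrow> 'u::ab_group_add) \<Rightarrow> bool" where
  "addh s1 s2 F \<longleftrightarrow> (\<forall>x y. F (x + y) = F x + F y) \<and> (\<forall>c x. F (s1 c x) = s2 c (F x))"

lemma addh_comp: "addh s1 s2 F \<Longrightarrow> lin_fun s2 f \<Longrightarrow> lin_fun s1 (\<lambda>x. f (F x))"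
  by (simp add: addh_def lin_fun_def)

lemma te_bilin_vec:
  assumes vsW: "vector_space (scW :: complex \<Rightarrow> 'w::ab_group_add \<Rightarrow> 'w)"
    and vsU: "vector_space (scU :: complex \<Rightarrow> 'u::ab_group_add \<Rightarrow> 'u)"
    and te: "tensor_eq scV scW xs ys"
    and l1: "\<And>q. addh scV scU (\<lambda>p. M p q)" and l2: "\<And>p. addh scW scU (M p)"
  shows "(\<Sum>(p,q)\<leftarrow>xs. M p q) = (\<Sum>(p,q)\<leftarrow>ys. M p q)"
proof (rule sep[OF vsU])
  fix f assume f: "lin_fun scU f"
  show "f (\<Sum>(p,q)\<leftarrow>xs. M p q) = f (\<Sum>(p,q)\<leftarrow>ys. M p q)"
    unfolding lin_fun_sum_list2[OF f]
    by (rule te_bilin[OF vsW te]) (use addh_comp[OF l1 f] addh_comp[OF l2 f] in auto)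
qed

lemma te_refl: "tensor_eq s1 s2 xs xs" by (simp add: tensor_eq_def)
lemma te_sym: "tensor_eq s1 s2 xs ys \<Longrightarrow> tensor_eq s1 s2 ys xs" by (simp add: tensor_eq_def)
lemma te_trans: "tensor_eq s1 s2 xs ys \<Longrightarrow> tensor_eq s1 s2 ys zs \<Longrightarrow> tensor_eq s1 s2 xs zs"
  by (simp add: tensor_eq_def)
lemma te_append: "tensor_eq s1 s2 xs ys \<Longrightarrow> tensor_eq s1 s2 xs' ys' \<Longrightarrow> tensor_eq s1 s2 (xs @ xs') (ys @ ys')"
  by (simp add: tensor_eq_def)
lemma te_use: "tensor_eq s1 s2 xs ys \<Longrightarrow> lin_fun s1 f \<Longrightarrow> lin_fun s2 g \<Longrightarrow>
  (\<Sum>(x,y)\<leftarrow>xs. f x * g y) = (\<Sum>(x,y)\<leftarrow>ys. f x * g y)"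
  by (simp add: tensor_eq_def)




locale cqg =
  fixes sc :: "complex \<Rightarrow> 'a::ring_1 \<Rightarrow> 'a"
    and st :: "'a \<Rightarrow> 'a" and Delta :: "'a \<Rightarrow> ('a \<times> 'a) list"
    and eps :: "'a \<Rightarrow> complex" and S :: "'a \<Rightarrow> 'a" and Phi :: "'a \<Rightarrow> complex"
  assumes cqg: "cqg_hopf_star_algebra sc st Delta eps S Phi"
begin

lemma ax: "cqg_hopf_star_algebra sc st Delta eps S Phi" by (rule cqg)
lemmas ax' = ax[unfolded cqg_hopf_star_algebra_def]
lemma vs: "vector_space sc" using ax' by blast
sublocale vs: vector_space sc by (rule vs)

lemma scm1: "sc c (x * y) = sc c x * y" using ax' by (elim conjE) fast
lemma scm2: "sc c (x * y) = x * sc c y" using ax' by (elim conjE) fast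
lemma D_add: "tensor_eq sc sc (Delta (x + y)) (Delta x @ Delta y)" using ax' by (elim conjE) fast
lemma D_sc: "tensor_eq sc sc (Delta (sc c x)) (map (\<lambda>(p,q). (sc c p, q)) (Delta x))" using ax' by (elim conjE) fast
lemma D_mult: "tensor_eq sc sc (Delta (x * y)) [(p * p', q * q'). (p,q) \<leftarrow> Delta x, (p',q') \<leftarrow> Delta y]"
  using ax' by (elim conjE) fast
lemma coassoc: "lin_fun sc f \<Longrightarrow> lin_fun sc g \<Longrightarrow> lin_fun sc h \<Longrightarrow>
        (\<Sum>(p,q)\<leftarrow>Delta x. \<Sum>(p',q')\<leftarrow>Delta p. f p' * g q' * h q) =
        (\<Sum>(p,q)\<leftarrow>Delta x. \<Sum>(p',q')\<leftarrow>Delta q. f p * g p' * h q')"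
  using ax' by (elim conjE) fast
lemma eps_lin: "lin_fun sc eps" using ax' by (elim conjE) fast
lemma counit1: "(\<Sum>(p,q)\<leftarrow>Delta x. sc (eps p) q) = x" using ax' by (elim conjE) fast
lemma counit2: "(\<Sum>(p,q)\<leftarrow>Delta x. sc (eps q) p) = x" using ax' by (elim conjE) fast
lemma S_add: "S (x + y) = S x + S y" using ax' by (elim conjE) fast
lemma S_sc: "S (sc c x) = sc c (S x)" using ax' by (elim conjE) fast
lemma ant2: "(\<Sum>(p,q)\<leftarrow>Delta x. p * S q) = sc (eps x) 1" using ax' by (elim conjE) fast
lemma st_add: "st (x + y) = st x + st y" using ax' by (elim conjE) fast
lemma st_sc: "st (sc c x) = sc (cnj c) (st x)" using ax' by (elim conjE) fast
lemma st_mult: "st (x * y) = st y * st x" using ax' by (elim conjE) fast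
lemma st_st[simp]: "st (st x) = x" using ax' by (elim conjE) fast
lemma D_st: "tensor_eq sc sc (Delta (st x)) (map (\<lambda>(p,q). (st p, st q)) (Delta x))" using ax' by (elim conjE) fast
lemma Phi_lin: "lin_fun sc Phi" using ax' by (elim conjE) fast
lemma Phi_pos: "Im (Phi (st x * x)) = 0 \<and> 0 \<le> Re (Phi (st x * x))" using ax' by (elim conjE) fast
lemma Phi_faith: "Phi (st x * x) = 0 \<Longrightarrow> x = 0" using ax' by (elim conjE) fast
lemma invl: "(\<Sum>(p,q)\<leftarrow>Delta x. sc (Phi p) q) = sc (Phi x) 1" using ax' by (elim conjE) fast

lemma Phi_add: "Phi (x + y) = Phi x + Phi y" using Phi_lin lin_fun_add by blast
lemma Phi_sc: "Phi (sc c x) = c * Phi x" using Phi_lin lin_fun_sc by blast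
lemma Phi_diff: "Phi (x - y) = Phi x - Phi y"
proof -
  have "Phi x = Phi ((x - y) + y)" by simp
  also have "\<dots> = Phi (x - y) + Phi y" by (rule Phi_add)
  finally show ?thesis by simp
qed

lemma st_zero: "st 0 = 0"
proof -
  have "st 0 = st 0 + st 0" using st_add[of 0 0] by simp
  then show ?thesis by simp
qed
lemma st_sl2: "st (\<Sum>(p,q)\<leftarrow>xs. g p q) = (\<Sum>(p,q)\<leftarrow>xs. st (g p q))"
  by (induction xs) (auto simp: st_zero st_add)
lemma st_one: "st 1 = 1"
proof -
  have "st (st 1) = st (1 * st 1)" by simp
  also have "\<dots> = st (st 1) * st 1" by (rule st_mult)
  finally have "1 = st 1" by simp
  then show ?thesis by simp
qed
lemma sc_sl2: "sc c (\<Sum>(p,q)\<leftarrow>xs. g p q) = (\<Sum>(p,q)\<leftarrow>xs. sc c (g p q))"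
  by (induction xs) (auto simp: vs.scale_right_distrib)
lemma cnj_sl2: "cnj (\<Sum>(p,q)\<leftarrow>xs. g p q) = (\<Sum>(p,q)\<leftarrow>xs. cnj (g p q))"
  by (induction xs) auto
lemma sl_map_st: "(\<Sum>(p,q)\<leftarrow>map (\<lambda>(p,q). (st p, st q)) xs. M p q) = (\<Sum>(p,q)\<leftarrow>xs. M (st p) (st q))"
  by (induction xs) auto
lemma sl_map_sc: "(\<Sum>(p,q)\<leftarrow>map (\<lambda>(p,q). (sc c p, q)) xs. M p q) = (\<Sum>(p,q)\<leftarrow>xs. M (sc c p) q)"
  by (induction xs) auto

lemma lin_mr: "lin_fun sc f \<Longrightarrow> lin_fun sc (\<lambda>x. f (x * z))"
  unfolding lin_fun_def by (simp add: distrib_right scm1[symmetric])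
lemma lin_ml: "lin_fun sc f \<Longrightarrow> lin_fun sc (\<lambda>x. f (z * x))"
  unfolding lin_fun_def by (simp add: distrib_left scm2[symmetric])
lemma lin_st: "lin_fun sc f \<Longrightarrow> lin_fun sc (\<lambda>x. cnj (f (st x)))"
  unfolding lin_fun_def by (simp add: st_add st_sc)

lemma te_st: assumes "tensor_eq sc sc xs ys"
  shows "tensor_eq sc sc (map (\<lambda>(p,q). (st p, st q)) xs) (map (\<lambda>(p,q). (st p, st q)) ys)"
  unfolding tensor_eq_def
proof (intro allI impI)
  fix f g assume f: "lin_fun sc f" and g: "lin_fun sc g"
  have "(\<Sum>(x,y)\<leftarrow>map (\<lambda>(p,q). (st p, st q)) xs. f x * g y) = cnj (\<Sum>(x,y)\<leftarrow>xs. cnj (f (st x)) * cnj (g (st y)))"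
    unfolding sl_map_st cnj_sl2 by simp
  also have "\<dots> = cnj (\<Sum>(x,y)\<leftarrow>ys. cnj (f (st x)) * cnj (g (st y)))"
    using te_use[OF assms lin_st[OF f] lin_st[OF g]] by simp
  also have "\<dots> = (\<Sum>(x,y)\<leftarrow>map (\<lambda>(p,q). (st p, st q)) ys. f x * g y)"
    unfolding sl_map_st cnj_sl2 by simp
  finally show "(\<Sum>(x,y)\<leftarrow>map (\<lambda>(p,q). (st p, st q)) xs. f x * g y) = (\<Sum>(x,y)\<leftarrow>map (\<lambda>(p,q). (st p, st q)) ys. f x * g y)" .
qed

lemma te_sc: assumes "tensor_eq sc sc xs ys"
  shows "tensor_eq sc sc (map (\<lambda>(p,q). (sc c p, q)) xs) (map (\<lambda>(p,q). (sc c p, q)) ys)"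
  unfolding tensor_eq_def
proof (intro allI impI)
  fix f g assume f: "lin_fun sc f" and g: "lin_fun sc g"
  have "(\<Sum>(x,y)\<leftarrow>map (\<lambda>(p,q). (sc c p, q)) xs. f x * g y) = c * (\<Sum>(x,y)\<leftarrow>xs. f x * g y)"
    unfolding sl_map_sc sl_mult_left by (simp add: lin_fun_sc[OF f] mult.assoc)
  also have "\<dots> = c * (\<Sum>(x,y)\<leftarrow>ys. f x * g y)"
    using te_use[OF assms f g] by simp
  also have "\<dots> = (\<Sum>(x,y)\<leftarrow>map (\<lambda>(p,q). (sc c p, q)) ys. f x * g y)"
    unfolding sl_map_sc sl_mult_left by (simp add: lin_fun_sc[OF f] mult.assoc)
  finally show "(\<Sum>(x,y)\<leftarrow>map (\<lambda>(p,q). (sc c p, q)) xs. f x * g y) = (\<Sum>(x,y)\<leftarrow>map (\<lambda>(p,q). (sc c p, q)) ys. f x * g y)" .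
qed

lemma addh_scM1: "lin_fun sc g \<Longrightarrow> addh sc sc (\<lambda>x. sc (g x) z)"
  unfolding addh_def lin_fun_def by (simp add: vs.scale_left_distrib)
lemma addh_scM2: "addh sc sc H \<Longrightarrow> addh sc sc (\<lambda>a. sc k (H a))"
  unfolding addh_def by (simp add: vs.scale_right_distrib mult.commute)
lemma addh_id: "addh sc sc (\<lambda>a. a)" unfolding addh_def by simp
lemma addh_T: "addh sc sc (\<lambda>a. st (S (st a)))" unfolding addh_def by (simp add: st_add S_add st_sc S_sc)
lemma addh_mr: "addh sc sc (\<lambda>x. x * z)" unfolding addh_def by (simp add: distrib_right scm1)
lemma addh_Sl: "addh sc sc (\<lambda>x. z * S x)" unfolding addh_def by (simp add: distrib_left S_add S_sc scm2)

lemma D_st_sym: "tensor_eq sc sc (map (\<lambda>(p,q). (st p, st q)) (Delta x)) (Delta (st x))"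
  by (rule te_sym[OF D_st])

lemma eps_st: "eps (st x) = cnj (eps x)"
proof -
  define e' where "e' x = cnj (eps (st x))" for x
  have le': "lin_fun sc e'" unfolding e'_def using lin_st[OF eps_lin] .
  have c1: "(\<Sum>(p,q)\<leftarrow>Delta x. sc (e' q) p) = x" for x
  proof -
    have "st (\<Sum>(p,q)\<leftarrow>Delta x. sc (e' q) p) = (\<Sum>(p,q)\<leftarrow>Delta x. sc (eps (st q)) (st p))"
      by (simp add: st_sl2 st_sc e'_def)
    also have "\<dots> = (\<Sum>(p,q)\<leftarrow>map (\<lambda>(p,q). (st p, st q)) (Delta x). sc (eps q) p)"
      unfolding sl_map_st by simp
    also have "\<dots> = (\<Sum>(p,q)\<leftarrow>Delta (st x). sc (eps q) p)"
      by (rule te_bilin_vec[OF vs vs D_st_sym]) (auto intro: addh_scM2 addh_id addh_scM1 eps_lin)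
    also have "\<dots> = st x" by (rule counit2)
    finally show ?thesis by (metis st_st)
  qed
  have c2: "(\<Sum>(p,q)\<leftarrow>Delta x. sc (e' p) q) = x" for x
  proof -
    have "st (\<Sum>(p,q)\<leftarrow>Delta x. sc (e' p) q) = (\<Sum>(p,q)\<leftarrow>Delta x. sc (eps (st p)) (st q))"
      by (simp add: st_sl2 st_sc e'_def)
    also have "\<dots> = (\<Sum>(p,q)\<leftarrow>map (\<lambda>(p,q). (st p, st q)) (Delta x). sc (eps p) q)"
      unfolding sl_map_st by simp
    also have "\<dots> = (\<Sum>(p,q)\<leftarrow>Delta (st x). sc (eps p) q)"
      by (rule te_bilin_vec[OF vs vs D_st_sym]) (auto intro: addh_scM2 addh_id addh_scM1 eps_lin)
    also have "\<dots> = st x" by (rule counit1)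
    finally show ?thesis by (metis st_st)
  qed
  have "eps x = eps (\<Sum>(p,q)\<leftarrow>Delta x. sc (e' q) p)" using c1 by simp
  also have "\<dots> = (\<Sum>(p,q)\<leftarrow>Delta x. e' q * eps p)"
    by (simp add: lin_fun_sum_list2[OF eps_lin] lin_fun_sc[OF eps_lin])
  also have "\<dots> = (\<Sum>(p,q)\<leftarrow>Delta x. eps p * e' q)" by (simp add: mult.commute)
  also have "\<dots> = e' (\<Sum>(p,q)\<leftarrow>Delta x. sc (eps p) q)"
    by (simp add: lin_fun_sum_list2[OF le'] lin_fun_sc[OF le'])
  also have "\<dots> = e' x" using counit1 by simp
  finally show ?thesis unfolding e'_def by simp
qed

lemma Phi_herm: "Phi (st y * x) = cnj (Phi (st x * y))"
proof -
  define a where "a = Phi (st x * y)"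
  define b where "b = Phi (st y * x)"
  have e1: "st (x + y) * (x + y) = st x * x + st x * y + st y * x + st y * y"
    by (simp add: st_add algebra_simps)
  have "Phi (st (x + y) * (x + y)) = Phi (st x * x) + a + b + Phi (st y * y)"
    unfolding e1 a_def b_def by (simp add: Phi_add)
  then have i1: "Im (a + b) = 0" using Phi_pos[of "x+y"] Phi_pos[of x] Phi_pos[of y] by simp
  have e2: "st (x + sc \<i> y) * (x + sc \<i> y) = st x * x + sc \<i> (st x * y) + sc (- \<i>) (st y * x) + st y * y"
  proof -
    have "st (x + sc \<i> y) * (x + sc \<i> y) = (st x + sc (-\<i>) (st y)) * (x + sc \<i> y)"
      by (simp add: st_add st_sc)
    also have "\<dots> = st x * x + st x * sc \<i> y + sc (-\<i>) (st y) * x + sc (-\<i>) (st y) * sc \<i> y"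
      by (simp add: algebra_simps)
    also have "sc (-\<i>) (st y) * sc \<i> y = st y * y"
      by (simp add: scm1[symmetric] scm2[symmetric])
    finally show ?thesis by (simp add: scm1[symmetric] scm2[symmetric])
  qed
  have "Phi (st (x + sc \<i> y) * (x + sc \<i> y)) = Phi (st x * x) + \<i> * a + (- \<i>) * b + Phi (st y * y)"
    unfolding e2 a_def b_def by (simp add: Phi_add Phi_sc Phi_diff)
  then have i2: "Re a - Re b = 0" using Phi_pos[of "x + sc \<i> y"] Phi_pos[of x] Phi_pos[of y] by simp
  have "b = cnj a" using i1 i2 by (simp add: complex_eq_iff)
  then show ?thesis unfolding a_def b_def .
qed

end



context cqg
begin

lemma coassoc_K:
  assumes g: "lin_fun sc g" and K1: "\<And>b. lin_fun sc (\<lambda>a. K a b)" and K2: "\<And>a. lin_fun sc (K a)"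
  shows "(\<Sum>(p,q)\<leftarrow>Delta x. \<Sum>(p',q')\<leftarrow>Delta p. g p' * K q' q) =
         (\<Sum>(p,q)\<leftarrow>Delta x. \<Sum>(p',q')\<leftarrow>Delta q. g p * K p' q')"
proof -
  define Q where "Q = set (map snd (Delta x)) \<union> (\<Union>q\<in>set (map snd (Delta x)). set (map snd (Delta q)))"
  have finQ: "finite Q" by (simp add: Q_def)
  obtain E c where finE: "finite E" and lc: "\<And>e. lin_fun sc (c e)"
    and ex: "\<And>q. q \<in> Q \<Longrightarrow> q = (\<Sum>e\<in>E. sc (c e q) e)"
    using expand[OF vs finQ] by metis
  have Kx: "K a q = (\<Sum>e\<in>E. K a e * c e q)" if "q \<in> Q" for a q
  proof -
    have "K a q = K a (\<Sum>e\<in>E. sc (c e q) e)" using ex[OF that] by simp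
    also have "\<dots> = (\<Sum>e\<in>E. K a e * c e q)"
      by (simp add: lin_fun_sum[OF K2] lin_fun_sc[OF K2] mult.commute)
    finally show ?thesis .
  qed
  have "(\<Sum>(p,q)\<leftarrow>Delta x. \<Sum>(p',q')\<leftarrow>Delta p. g p' * K q' q) =
        (\<Sum>(p,q)\<leftarrow>Delta x. \<Sum>(p',q')\<leftarrow>Delta p. \<Sum>e\<in>E. g p' * K q' e * c e q)"
  proof (rule sl2_cong, rule sl2_cong)
    fix p q p' q' assume "(p,q) \<in> set (Delta x)"
    then have "q \<in> Q" unfolding Q_def by force
    then show "g p' * K q' q = (\<Sum>e\<in>E. g p' * K q' e * c e q)"
      by (simp add: Kx[of q q'] sum_distrib_left mult.assoc)
  qed
  also have "\<dots> = (\<Sum>e\<in>E. \<Sum>(p,q)\<leftarrow>Delta x. \<Sum>(p',q')\<leftarrow>Delta p. g p' * K q' e * c e q)"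
    by (simp only: sl_sum_swap)
  also have "\<dots> = (\<Sum>e\<in>E. \<Sum>(p,q)\<leftarrow>Delta x. \<Sum>(p',q')\<leftarrow>Delta q. g p * K p' e * c e q')"
    by (rule sum.cong[OF refl], rule coassoc[OF g K1 lc])
  also have "\<dots> = (\<Sum>(p,q)\<leftarrow>Delta x. \<Sum>(p',q')\<leftarrow>Delta q. \<Sum>e\<in>E. g p * K p' e * c e q')"
    by (simp only: sl_sum_swap)
  also have "\<dots> = (\<Sum>(p,q)\<leftarrow>Delta x. \<Sum>(p',q')\<leftarrow>Delta q. g p * K p' q')"
  proof (rule sl2_cong, rule sl2_cong)
    fix p q p' q' assume "(p,q) \<in> set (Delta x)" "(p',q') \<in> set (Delta q)"
    then have "q' \<in> Q" unfolding Q_def by force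
    then show "(\<Sum>e\<in>E. g p * K p' e * c e q') = g p * K p' q'"
      by (simp add: Kx[of q' p'] sum_distrib_left mult.assoc)
  qed
  finally show ?thesis .
qed

lemma antT: "(\<Sum>(p,q)\<leftarrow>Delta c. st (S (st q)) * p) = sc (eps c) 1"
proof -
  have "(\<Sum>(p,q)\<leftarrow>Delta c. st p * S (st q)) = (\<Sum>(p,q)\<leftarrow>map (\<lambda>(p,q). (st p, st q)) (Delta c). p * S q)"
    unfolding sl_map_st by simp
  also have "\<dots> = (\<Sum>(p,q)\<leftarrow>Delta (st c). p * S q)"
    by (rule te_bilin_vec[OF vs vs D_st_sym]) (auto intro: addh_mr addh_Sl)
  also have "\<dots> = sc (eps (st c)) 1" by (rule ant2)
  finally have "st (\<Sum>(p,q)\<leftarrow>Delta c. st p * S (st q)) = st (sc (eps (st c)) 1)" by simp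
  then show ?thesis by (simp add: st_sl2 st_mult st_sc st_one eps_st)
qed

lemma key: "(\<Sum>(y,b)\<leftarrow>Delta u. sc (Phi (y * w)) (st (S (st b)))) = (\<Sum>(x,a)\<leftarrow>Delta w. sc (Phi (u * x)) a)"
proof (rule sep[OF vs])
  fix f assume f: "lin_fun sc f"
  define T where "T b = st (S (st b))" for b
  have stepA: "Phi z * f v = (\<Sum>(p,q)\<leftarrow>Delta z. Phi p * f (v * q))" for z v
  proof -
    have "sc (Phi z) v = v * sc (Phi z) 1" by (simp add: scm2[symmetric])
    also have "\<dots> = v * (\<Sum>(p,q)\<leftarrow>Delta z. sc (Phi p) q)" by (simp add: invl)
    also have "\<dots> = (\<Sum>(p,q)\<leftarrow>Delta z. sc (Phi p) (v * q))"
      by (simp add: sl_mult_left scm2)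
    finally have "f (sc (Phi z) v) = f (\<Sum>(p,q)\<leftarrow>Delta z. sc (Phi p) (v * q))" by simp
    then show ?thesis by (simp add: lin_fun_sc[OF f] lin_fun_sum_list2[OF f])
  qed
  have stepA2: "Phi (y * w) * f v = (\<Sum>(p,q)\<leftarrow>Delta y. \<Sum>(p',q')\<leftarrow>Delta w. Phi (p * p') * f (v * (q * q')))" for y v
  proof -
    have "Phi (y * w) * f v = (\<Sum>(p,q)\<leftarrow>Delta (y * w). Phi p * f (v * q))" by (rule stepA)
    also have "\<dots> = (\<Sum>(p,q)\<leftarrow>[(p * p', q * q'). (p,q) \<leftarrow> Delta y, (p',q') \<leftarrow> Delta w]. Phi p * f (v * q))"
      by (rule te_use[OF D_mult Phi_lin lin_ml[OF f]])
    also have "\<dots> = (\<Sum>(p,q)\<leftarrow>Delta y. \<Sum>(p',q')\<leftarrow>Delta w. Phi (p * p') * f (v * (q * q')))"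
      by (rule sl_prodlist)
    finally show ?thesis .
  qed
  have inner: "(\<Sum>(y2,b)\<leftarrow>Delta c. a0 * f (T b * (y2 * q'))) = a0 * (eps c * f q')" for a0 c q'
  proof -
    have "(\<Sum>(y2,b)\<leftarrow>Delta c. a0 * f (T b * (y2 * q'))) = a0 * f ((\<Sum>(y2,b)\<leftarrow>Delta c. T b * y2) * q')"
      by (simp add: sl_mult_right lin_fun_sum_list2[OF f] sl_mult_left mult.assoc)
    also have "\<dots> = a0 * (eps c * f q')"
      unfolding T_def antT by (simp add: scm1[symmetric] lin_fun_sc[OF f])
    finally show ?thesis .
  qed
  have cnt: "(\<Sum>(y1,c)\<leftarrow>Delta u. Phi (y1 * p') * (eps c * z)) = Phi (u * p') * z" for p' z
  proof -
    have "Phi (u * p') = Phi ((\<Sum>(y1,c)\<leftarrow>Delta u. sc (eps c) y1) * p')" by (simp add: counit2)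
    also have "\<dots> = (\<Sum>(y1,c)\<leftarrow>Delta u. eps c * Phi (y1 * p'))"
      by (simp add: sl_mult_right scm1[symmetric] lin_fun_sum_list2[OF Phi_lin] Phi_sc)
    finally show ?thesis by (simp add: sl_mult_right sl_mult_left mult_ac)
  qed
  have lg: "lin_fun sc (\<lambda>p. Phi (p * p'))" for p' by (rule lin_mr[OF Phi_lin])
  have lK1: "lin_fun sc (\<lambda>q. f (T b * (q * q')))" for b q'
    using lin_mr[OF lin_ml[OF f, of "T b"], of q'] by simp
  have lK2: "lin_fun sc (\<lambda>b. f (T b * (q * q')))" for q q'
    using addh_comp[OF addh_T lin_mr[OF f, of "q * q'"]] unfolding T_def .
  have "f (\<Sum>(y,b)\<leftarrow>Delta u. sc (Phi (y * w)) (T b)) = (\<Sum>(y,b)\<leftarrow>Delta u. Phi (y * w) * f (T b))"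
    by (simp add: lin_fun_sum_list2[OF f] lin_fun_sc[OF f])
  also have "\<dots> = (\<Sum>(y,b)\<leftarrow>Delta u. \<Sum>(p,q)\<leftarrow>Delta y. \<Sum>(p',q')\<leftarrow>Delta w. Phi (p * p') * f (T b * (q * q')))"
    by (simp only: stepA2)
  also have "\<dots> = (\<Sum>(y,b)\<leftarrow>Delta u. \<Sum>(p',q')\<leftarrow>Delta w. \<Sum>(p,q)\<leftarrow>Delta y. Phi (p * p') * f (T b * (q * q')))"
    by (rule sl2_cong, rule sl_sl_swap)
  also have "\<dots> = (\<Sum>(p',q')\<leftarrow>Delta w. \<Sum>(y,b)\<leftarrow>Delta u. \<Sum>(p,q)\<leftarrow>Delta y. Phi (p * p') * f (T b * (q * q')))"
    by (rule sl_sl_swap)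
  also have "\<dots> = (\<Sum>(p',q')\<leftarrow>Delta w. \<Sum>(y1,c)\<leftarrow>Delta u. \<Sum>(y2,b)\<leftarrow>Delta c. Phi (y1 * p') * f (T b * (y2 * q')))"
    by (rule sl2_cong, rule coassoc_K[OF lg lK1 lK2])
  also have "\<dots> = (\<Sum>(p',q')\<leftarrow>Delta w. \<Sum>(y1,c)\<leftarrow>Delta u. Phi (y1 * p') * (eps c * f q'))"
    by (simp only: inner)
  also have "\<dots> = (\<Sum>(p',q')\<leftarrow>Delta w. Phi (u * p') * f q')"
    by (simp only: cnt)
  also have "\<dots> = f (\<Sum>(x,a)\<leftarrow>Delta w. sc (Phi (u * x)) a)"
    by (simp add: lin_fun_sum_list2[OF f] lin_fun_sc[OF f])
  finally show "f (\<Sum>(y,b)\<leftarrow>Delta u. sc (Phi (y * w)) (st (S (st b)))) = f (\<Sum>(x,a)\<leftarrow>Delta w. sc (Phi (u * x)) a)"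
    unfolding T_def .
qed

end



context cqg
begin

lemma Dlin: assumes f: "lin_fun sc f" and g: "lin_fun sc g"
  shows "lin_fun sc (\<lambda>x. \<Sum>(p,q)\<leftarrow>Delta x. f p * g q)"
  unfolding lin_fun_def
proof (intro conjI allI)
  fix x y
  show "(\<Sum>(p,q)\<leftarrow>Delta (x + y). f p * g q) = (\<Sum>(p,q)\<leftarrow>Delta x. f p * g q) + (\<Sum>(p,q)\<leftarrow>Delta y. f p * g q)"
    using te_use[OF D_add f g, of x y] by simp
next
  fix c x
  have "(\<Sum>(p,q)\<leftarrow>Delta (sc c x). f p * g q) = (\<Sum>(p,q)\<leftarrow>map (\<lambda>(p,q). (sc c p, q)) (Delta x). f p * g q)"
    by (rule te_use[OF D_sc f g])
  also have "\<dots> = c * (\<Sum>(p,q)\<leftarrow>Delta x. f p * g q)"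
    unfolding sl_map_sc sl_mult_left by (simp add: lin_fun_sc[OF f] mult.assoc)
  finally show "(\<Sum>(p,q)\<leftarrow>Delta (sc c x). f p * g q) = c * (\<Sum>(p,q)\<leftarrow>Delta x. f p * g q)" .
qed

lemma coact_coassoc:
  assumes te: "tensor_eq sc sc xs (Delta v)"
    and tew: "\<And>w a. (w,a) \<in> set xs \<Longrightarrow> tensor_eq sc sc (al w) (Delta w)"
    and f: "lin_fun sc f" and g: "lin_fun sc g" and h: "lin_fun sc h"
  shows "(\<Sum>(w,a)\<leftarrow>xs. \<Sum>(w',a')\<leftarrow>al w. f w' * g a' * h a) =
         (\<Sum>(w,a)\<leftarrow>xs. \<Sum>(p,q)\<leftarrow>Delta a. f w * g p * h q)"
proof -
  have "(\<Sum>(w,a)\<leftarrow>xs. \<Sum>(w',a')\<leftarrow>al w. f w' * g a' * h a) =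
        (\<Sum>(w,a)\<leftarrow>xs. (\<Sum>(w',a')\<leftarrow>Delta w. f w' * g a') * h a)"
  proof (rule sl2_cong)
    fix w a assume wa: "(w,a) \<in> set xs"
    have "(\<Sum>(w',a')\<leftarrow>al w. f w' * g a' * h a) = (\<Sum>(w',a')\<leftarrow>al w. f w' * g a') * h a"
      by (simp add: sl_mult_right)
    also have "\<dots> = (\<Sum>(w',a')\<leftarrow>Delta w. f w' * g a') * h a"
      using te_use[OF tew[OF wa] f g] by simp
    finally show "(\<Sum>(w',a')\<leftarrow>al w. f w' * g a' * h a) = (\<Sum>(w',a')\<leftarrow>Delta w. f w' * g a') * h a" .
  qed
  also have "\<dots> = (\<Sum>(w,a)\<leftarrow>Delta v. (\<Sum>(w',a')\<leftarrow>Delta w. f w' * g a') * h a)"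
    by (rule te_use[OF te Dlin[OF f g] h])
  also have "\<dots> = (\<Sum>(w,a)\<leftarrow>Delta v. \<Sum>(w',a')\<leftarrow>Delta w. f w' * g a' * h a)"
    by (simp add: sl_mult_right)
  also have "\<dots> = (\<Sum>(w,a)\<leftarrow>Delta v. \<Sum>(p,q)\<leftarrow>Delta a. f w * g p * h q)"
    by (rule coassoc[OF f g h])
  also have "\<dots> = (\<Sum>(w,a)\<leftarrow>Delta v. f w * (\<Sum>(p,q)\<leftarrow>Delta a. g p * h q))"
    by (simp add: sl_mult_left mult.assoc)
  also have "\<dots> = (\<Sum>(w,a)\<leftarrow>xs. f w * (\<Sum>(p,q)\<leftarrow>Delta a. g p * h q))"
    by (rule te_use[OF te_sym[OF te] f Dlin[OF g h]])
  also have "\<dots> = (\<Sum>(w,a)\<leftarrow>xs. \<Sum>(p,q)\<leftarrow>Delta a. f w * g p * h q)"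
    by (simp add: sl_mult_left mult.assoc)
  finally show ?thesis .
qed

lemma compat:
  assumes tx: "tensor_eq sc sc xs (Delta b)" and ty: "tensor_eq sc sc ys (Delta v)"
    and tz: "tensor_eq sc sc zs (Delta (b * v))"
  shows "tensor_eq sc sc zs [(p * w, q * a). (p,q) \<leftarrow> xs, (w,a) \<leftarrow> ys]"
  unfolding tensor_eq_def
proof (intro allI impI)
  fix f g assume f: "lin_fun sc f" and g: "lin_fun sc g"
  have "(\<Sum>(x,y)\<leftarrow>zs. f x * g y) = (\<Sum>(x,y)\<leftarrow>[(p * p', q * q'). (p,q) \<leftarrow> Delta b, (p',q') \<leftarrow> Delta v]. f x * g y)"
    using te_use[OF tz f g] te_use[OF D_mult f g] by simp
  also have "\<dots> = (\<Sum>(p,q)\<leftarrow>Delta b. \<Sum>(p',q')\<leftarrow>Delta v. f (p * p') * g (q * q'))"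
    by (rule sl_prodlist)
  also have "\<dots> = (\<Sum>(p',q')\<leftarrow>Delta v. \<Sum>(p,q)\<leftarrow>Delta b. f (p * p') * g (q * q'))"
    by (rule sl_sl_swap)
  also have "\<dots> = (\<Sum>(p',q')\<leftarrow>Delta v. \<Sum>(p,q)\<leftarrow>xs. f (p * p') * g (q * q'))"
    by (rule sl2_cong, rule te_use[OF te_sym[OF tx] lin_mr[OF f] lin_mr[OF g]])
  also have "\<dots> = (\<Sum>(p,q)\<leftarrow>xs. \<Sum>(p',q')\<leftarrow>Delta v. f (p * p') * g (q * q'))"
    by (rule sl_sl_swap)
  also have "\<dots> = (\<Sum>(p,q)\<leftarrow>xs. \<Sum>(p',q')\<leftarrow>ys. f (p * p') * g (q * q'))"
    by (rule sl2_cong, rule te_use[OF te_sym[OF ty] lin_ml[OF f] lin_ml[OF g]])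
  also have "\<dots> = (\<Sum>(x,y)\<leftarrow>[(p * w, q * a). (p,q) \<leftarrow> xs, (w,a) \<leftarrow> ys]. f x * g y)"
    by (rule sl_prodlist[symmetric])
  finally show "(\<Sum>(x,y)\<leftarrow>zs. f x * g y) = (\<Sum>(x,y)\<leftarrow>[(p * w, q * a). (p,q) \<leftarrow> xs, (w,a) \<leftarrow> ys]. f x * g y)" .
qed

lemma counit_te: assumes te: "tensor_eq sc sc xs (Delta v)"
  shows "(\<Sum>(w,a)\<leftarrow>xs. sc (eps a) w) = v"
proof -
  have "(\<Sum>(w,a)\<leftarrow>xs. sc (eps a) w) = (\<Sum>(w,a)\<leftarrow>Delta v. sc (eps a) w)"
    by (rule te_bilin_vec[OF vs vs te]) (auto intro: addh_scM2[OF addh_id] addh_scM1[OF eps_lin])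
  then show ?thesis by (simp add: counit2)
qed

lemma inner_te: assumes tw: "tensor_eq sc sc xs (Delta w)" and tv: "tensor_eq sc sc ys (Delta v)"
  shows "(\<Sum>(x,a)\<leftarrow>xs. sc (Phi (st v * x)) a) = (\<Sum>(x,a)\<leftarrow>ys. sc (Phi (st x * w)) (st (S a)))"
proof -
  have "(\<Sum>(x,a)\<leftarrow>xs. sc (Phi (st v * x)) a) = (\<Sum>(x,a)\<leftarrow>Delta w. sc (Phi (st v * x)) a)"
    by (rule te_bilin_vec[OF vs vs tw]) (auto intro: addh_scM2[OF addh_id] addh_scM1[OF lin_ml[OF Phi_lin]])
  also have "\<dots> = (\<Sum>(y,b)\<leftarrow>Delta (st v). sc (Phi (y * w)) (st (S (st b))))"
    by (rule key[symmetric])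
  also have "\<dots> = (\<Sum>(y,b)\<leftarrow>map (\<lambda>(p,q). (st p, st q)) (Delta v). sc (Phi (y * w)) (st (S (st b))))"
    by (rule te_bilin_vec[OF vs vs te_sym[OF D_st_sym]]) (auto intro: addh_scM2[OF addh_T] addh_scM1[OF lin_mr[OF Phi_lin]])
  also have "\<dots> = (\<Sum>(y,b)\<leftarrow>map (\<lambda>(p,q). (st p, st q)) ys. sc (Phi (y * w)) (st (S (st b))))"
    by (rule te_bilin_vec[OF vs vs te_st[OF te_sym[OF tv]]]) (auto intro: addh_scM2[OF addh_T] addh_scM1[OF lin_mr[OF Phi_lin]])
  also have "\<dots> = (\<Sum>(x,a)\<leftarrow>ys. sc (Phi (st x * w)) (st (S a)))"
    unfolding sl_map_st by simp
  finally show ?thesis .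
qed

end



theorem mainTheorem9:
  fixes sc :: "complex \<Rightarrow> 'a::ring_1 \<Rightarrow> 'a"
    and st :: "'a \<Rightarrow> 'a" and Delta :: "'a \<Rightarrow> ('a \<times> 'a) list"
    and eps :: "'a \<Rightarrow> complex" and S :: "'a \<Rightarrow> 'a" and Phi :: "'a \<Rightarrow> complex"
    and B :: "'a set"
  assumes "cqg_hopf_star_algebra sc st Delta eps S Phi"
    and "right_coideal_star_subalgebra sc st Delta B"
  shows "\<exists>alpha. (\<forall>b\<in>B. set (map fst (alpha b)) \<subseteq> B \<and> tensor_eq sc sc (alpha b) (Delta b)) \<and>
           in_BRepA sc st Delta eps S B B sc (\<lambda>b v. b * v) alpha (\<lambda>b b'. Phi (st b * b'))"
proof -
  interpret cqg sc st Delta eps S Phi by (rule cqg.intro) (rule assms(1))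
  have B1: "1 \<in> B" and B2: "\<And>x y. x \<in> B \<Longrightarrow> y \<in> B \<Longrightarrow> x + y \<in> B"
    and B3: "\<And>x y. x \<in> B \<Longrightarrow> y \<in> B \<Longrightarrow> x * y \<in> B"
    and B4: "\<And>c x. x \<in> B \<Longrightarrow> sc c x \<in> B"
    and B6: "\<And>b. b \<in> B \<Longrightarrow> \<exists>xs. set (map fst xs) \<subseteq> B \<and> tensor_eq sc sc (Delta b) xs"
    using assms(2) unfolding right_coideal_star_subalgebra_def by blast+
  define alpha where "alpha b = (SOME xs. set (map fst xs) \<subseteq> B \<and> tensor_eq sc sc (Delta b) xs)" for b
  have al: "set (map fst (alpha b)) \<subseteq> B \<and> tensor_eq sc sc (alpha b) (Delta b)" if "b \<in> B" for b
    using someI_ex[OF B6[OF that]] te_sym unfolding alpha_def by blast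
  have al1: "set (map fst (alpha b)) \<subseteq> B" if "b \<in> B" for b using al[OF that] by blast
  have al2: "tensor_eq sc sc (alpha b) (Delta b)" if "b \<in> B" for b using al[OF that] by blast
  have alB: "w \<in> B" if "(w,a) \<in> set (alpha v)" "v \<in> B" for w a v
    using al1[OF that(2)] that(1) by force
  have zeroB: "0 \<in> B" using B4[OF B1, of 0] by simp
  show ?thesis
  proof (rule exI[of _ alpha], intro conjI ballI)
    fix b assume "b \<in> B"
    then show "set (map fst (alpha b)) \<subseteq> B" "tensor_eq sc sc (alpha b) (Delta b)" using al by auto
  next
    show "in_BRepA sc st Delta eps S B B sc (\<lambda>b v. b * v) alpha (\<lambda>b b'. Phi (st b * b'))"
      unfolding in_BRepA_def
    proof (intro conjI ballI allI impI)
      show "vector_space sc" by (rule vs)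
      show "0 \<in> B" by (rule zeroB)
      show "v + w \<in> B" if "v \<in> B" "w \<in> B" for v w using B2 that .
      show "sc c v \<in> B" if "v \<in> B" for c v using B4 that .
      show "b * v \<in> B" if "b \<in> B" "v \<in> B" for b v using B3 that .
      show "(b + b') * v = b * v + b' * v" for b b' v :: 'a by (simp add: distrib_right)
      show "b * (v + w) = b * v + b * w" for b v w :: 'a by (simp add: distrib_left)
      show "sc c b * v = sc c (b * v)" for c and b v :: 'a by (simp add: scm1)
      show "b * sc c v = sc c (b * v)" for c and b v :: 'a by (simp add: scm2)
      show "b * b' * v = b * (b' * v)" for b b' v :: 'a by (simp add: mult.assoc)
      show "1 * v = v" for v :: 'a by simp
      show "set (map fst (alpha v)) \<subseteq> B" if "v \<in> B" for v using al1 that .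
      show "tensor_eq sc sc (alpha (v + w)) (alpha v @ alpha w)" if "v \<in> B" "w \<in> B" for v w
        using te_trans[OF al2[OF B2[OF that]] te_trans[OF D_add te_append[OF te_sym[OF al2[OF that(1)]] te_sym[OF al2[OF that(2)]]]]] .
      show "tensor_eq sc sc (alpha (sc c v)) (map (\<lambda>(x,a). (sc c x, a)) (alpha v))" if "v \<in> B" for c v
        using te_trans[OF al2[OF B4[OF that]] te_trans[OF D_sc te_sc[OF te_sym[OF al2[OF that]]]]] .
      show "(\<Sum>(w,a)\<leftarrow>alpha v. \<Sum>(w',a')\<leftarrow>alpha w. f w' * g a' * h a) =
            (\<Sum>(w,a)\<leftarrow>alpha v. \<Sum>(p,q)\<leftarrow>Delta a. f w * g p * h q)"
        if "v \<in> B" "lin_fun sc f" "lin_fun sc g" "lin_fun sc h" for v f g h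
        by (rule coact_coassoc[OF al2[OF that(1)] al2[OF alB[OF _ that(1)]] that(2-4)])
      show "(\<Sum>(w,a)\<leftarrow>alpha v. sc (eps a) w) = v" if "v \<in> B" for v
        by (rule counit_te[OF al2[OF that]])
      show "tensor_eq sc sc (alpha (b * v)) [(p * w, q * a). (p,q) \<leftarrow> xs, (w,a) \<leftarrow> alpha v]"
        if "b \<in> B" "v \<in> B" "set (map fst xs) \<subseteq> B" "tensor_eq sc sc xs (Delta b)" for b v xs
        by (rule compat[OF that(4) al2[OF that(2)] al2[OF B3[OF that(1,2)]]])
      show "Phi (st u * (v + w)) = Phi (st u * v) + Phi (st u * w)" for u v w :: 'a
        by (simp add: distrib_left Phi_add)
      show "Phi (st u * sc c v) = c * Phi (st u * v)" for c u v
        by (simp add: scm2[symmetric] Phi_sc)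
      show "Phi (st v * u) = cnj (Phi (st u * v))" for u v by (rule Phi_herm)
      show "Im (Phi (st v * v)) = 0" for v using Phi_pos by blast
      show "0 \<le> Re (Phi (st v * v))" for v using Phi_pos by blast
      show "v = 0" if "Phi (st v * v) = 0" for v using Phi_faith that .
      show "Phi (st v * (b * w)) = Phi (st (st b * v) * w)" for b v w
        by (simp add: st_mult mult.assoc)
      show "(\<Sum>(x,a)\<leftarrow>alpha w. sc (Phi (st v * x)) a) = (\<Sum>(x,a)\<leftarrow>alpha v. sc (Phi (st x * w)) (st (S a)))"
        if "v \<in> B" "w \<in> B" for v w
        by (rule inner_te[OF al2[OF that(2)] al2[OF that(1)]])
    qed
  qed
qed


end
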